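(* The complex conjugation map $\mathrm{Conj}:K\to K$, $$(z_1,\dots,z_{n-1};A^{(0)},(a_0^{(1)},A^{(1)}),\dots,(a_0^{(n)},A^{(n)}))\mapsto(\bar z_1,\dots,\bar z_{n-1};\overline{A^{(0)}},(\overline{a_0^{(1)}},\overline{A^{(1)}}),\dots,(\overline{a_0^{(n)}},\overline{A^{(n)}})),$$ is a partial operad automorphism of the sphere partial operad $K$; in particular, for $P\in K(m)$, $Q\in K(n)$ and $1\le i\le m$ such that $P\,{}_i\infty_0\,Q$ exists, $\overline{P}\,{}_i\infty_0\,\overline{Q}$ exists and $\overline{P\,{}_i\infty_0\,Q}=\overline{P}\,{}_i\infty_0\,\overline{Q}$, where $\overline{R}:=\mathrm{Conj}(R)$.
   Context: Sphere partial operad $K=\{K(n)\}_{n\in\mathbb{N}}$: $K(n)$ is the moduli space of conformal equivalence classes of spheres with tubes of type $n$, i.e. Riemann spheres with one negatively oriented puncture and $n$ ordered positively oriented punctures, each equipped with a local analytic coordinate vanishing at the puncture (equivalence: biholomorphisms preserving punctures, their order and the germs of the local coordinates). For $n\ge1$ each class has a unique canonical representative: $\hat{\mathbb{C}}$ with negative puncture at $\infty$ with local coordinate $f_0(w)=-\exp\big(-\sum_{j\ge1}A^{(0)}_jw^{-j+1}\frac{d}{dw}\big)\frac1w$ (so $\lim_{w\to\infty}wf_0(w)=-1$), positive punctures $z_1,\dots,z_{n-1}\in\mathbb{C}^\times$ and $z_n=0$ (pairwise distinct), with local coordinates $f_i(w)=\exp\big(\sum_{j\ge1}A^{(i)}_jx^{j+1}\frac{d}{dx}\big)(a_0^{(i)})^{x\frac{d}{dx}}x\big|_{x=w-z_i}$,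 where $a_0^{(i)}\in\mathbb{C}^\times$ and $A^{(i)}=(A^{(i)}_j)_{j\ge1}$ are complex sequences for which these series converge near $0$; this class is denoted $(z_1,\dots,z_{n-1};A^{(0)},(a_0^{(1)},A^{(1)}),\dots,(a_0^{(n)},A^{(n)}))$ (for $n=0$ only $A^{(0)}$ with $A^{(0)}_1=0$ remains). Bars denote componentwise complex conjugation. Sewing: for $P\in K(m)$, $Q\in K(n)$, $1\le i\le m$, let $f_i$ be the local coordinate at the $i$-th positive puncture $p$ of $P$ and $g_0$ the one at the negative puncture $q$ of $Q$; if there is $r>0$ with $p$ the only puncture in $f_i^{-1}(\overline{B_r})$ and $q$ the only puncture in $g_0^{-1}(\overline{B_{1/r}})$ ($B_r$ the open disk of radius $r$ about $0$), then $P\,{}_i\infty_0\,Q\in K(m+n-1)$ is the class of the sphere obtained by removing $f_i^{-1}(B_r)$ and $g_0^{-1}(B_{1/r})$ and gluing the boundaries via $g_0^{-1}\circ J\circ f_i$, $J(w)=-1/w$, keeping $P$'s negative puncture and ordering the positive punctures as the first $i-1$ of $P$, then those of $Q$, then the remaining ones of $P$. With these partial substitution maps, the identity $(\,;\mathbf{0},(1,\mathbf{0}))\in K(1)$ and the $S_n$-actions permuting positive punctures, $K$ is a partial operad. A partial operad automorphism is a family of bijections $K(n)\to K(n)$ fixing the identity, commuting with the symmetric group actions, and compatible with sewing (whenever $P\,{}_i\infty_0\,Q$ exists, the image sewing exists and equals the image of $P\,{}_i\infty_0\,Q$). *)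

theory Defs
  imports "HOL-Analysis.Analysis"
begin

text \<open>Canonical representatives of elements of the sphere partial operad K.
  pz k : position of the k-th positive puncture (k = 1..n; pz n = 0),
  sa k : the constant a_0^(k) (k = 1..n),
  sA k : the sequence A^(k) (k = 0..n; index j >= 1).
  Unused entries are normalised to 0, so that equal classes = equal records.\<close>

record sphere =
  pz :: "nat \<Rightarrow> complex"
  sa :: "nat \<Rightarrow> complex"
  sA :: "nat \<Rightarrow> nat \<Rightarrow> complex"

text \<open>Coefficients of T^k x, where T = sum_{j>=1} A_j x^(j+1) d/dx, as a formal power series.\<close>
fun iterT :: "(nat \<Rightarrow> complex) \<Rightarrow> nat \<Rightarrow> nat \<Rightarrow> complex" where
  "iterT A 0 = (\<lambda>l. if l = 1 then 1 else 0)"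
| "iterT A (Suc k) = (\<lambda>l. \<Sum>j = 1..<l. A j * of_nat (l - j) * iterT A k (l - j))"

text \<open>Coefficients of exp(T) x (T^k x has order >= k+1, so the sum is finite).\<close>
definition expcoef :: "(nat \<Rightarrow> complex) \<Rightarrow> nat \<Rightarrow> complex" where
  "expcoef A l = (\<Sum>k\<le>l. iterT A k l / of_nat (fact k))"

definition ser :: "(nat \<Rightarrow> complex) \<Rightarrow> complex \<Rightarrow> complex" where
  "ser A x = (\<Sum>l. expcoef A l * x ^ l)"

text \<open>Local coordinates of the canonical representative:
  f_0(w) = - exp(T_A0) x at x = 1/w  (equivalently -exp(-sum A_j w^(-j+1) d/dw)(1/w)),
  f_k(w) = a_0^(k) exp(T_Ak) x at x = w - z_k.\<close>
definition loc :: "sphere \<Rightarrow> nat \<Rightarrow> complex \<Rightarrow> complex" where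
  "loc P k w = (if k = 0 then - ser (sA P 0) (inverse w)
                else sa P k * ser (sA P k) (w - pz P k))"

definition K :: "nat \<Rightarrow> sphere set" where
  "K n = {P.
     (\<forall>k. (k = 0 \<or> n \<le> k) \<longrightarrow> pz P k = 0) \<and>
     (\<forall>k\<in>{1..<n}. pz P k \<noteq> 0) \<and>
     (\<forall>j\<in>{1..<n}. \<forall>k\<in>{1..<n}. j \<noteq> k \<longrightarrow> pz P j \<noteq> pz P k) \<and>
     (\<forall>k\<in>{1..n}. sa P k \<noteq> 0) \<and>
     (\<forall>k. (k = 0 \<or> n < k) \<longrightarrow> sa P k = 0) \<and>
     (\<forall>k. sA P k 0 = 0) \<and>
     (\<forall>k. n < k \<longrightarrow> sA P k = (\<lambda>_. 0)) \<and>
     (\<forall>k\<le>n. conv_radius (expcoef (sA P k)) > 0) \<and>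
     (n = 0 \<longrightarrow> sA P 0 1 = 0)}"

definition sph_id :: sphere where
  "sph_id = \<lparr>pz = (\<lambda>_. 0), sa = (\<lambda>k. if k = 1 then 1 else 0), sA = (\<lambda>_ _. 0)\<rparr>"

definition sconj :: "sphere \<Rightarrow> sphere" where
  "sconj P = \<lparr>pz = (\<lambda>k. cnj (pz P k)), sa = (\<lambda>k. cnj (sa P k)),
              sA = (\<lambda>k j. cnj (sA P k j))\<rparr>"

definition perm_act :: "nat \<Rightarrow> (nat \<Rightarrow> nat) \<Rightarrow> sphere \<Rightarrow> sphere \<Rightarrow> bool" where
  "perm_act n \<sigma> P Q \<longleftrightarrow> P \<in> K n \<and> Q \<in> K n \<and>
     (\<exists>\<psi>. bij \<psi> \<and> \<psi> holomorphic_on UNIV \<and>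
        (\<forall>\<^sub>F w in at_infinity. loc Q 0 (\<psi> w) = loc P 0 w) \<and>
        (\<forall>k\<in>{1..n}. \<psi> (pz P (\<sigma> k)) = pz Q k \<and>
           (\<forall>\<^sub>F w in nhds (pz P (\<sigma> k)). loc Q k (\<psi> w) = loc P (\<sigma> k) w)))"

text \<open>Sewing data with radius r: psiP is the (unique) holomorphic continuation of the inverse
  of f_i to a neighbourhood of the closed disk of radius r, so that f_i^{-1}(closed B_r) is
  psiP ` cball 0 r; psiQ is the continuation of the inverse of g_0 to a neighbourhood of the
  closed disk of radius 1/r, written in the coordinate u = 1/w at infinity.\<close>
definition sew_data ::
  "nat \<Rightarrow> nat \<Rightarrow> sphere \<Rightarrow> nat \<Rightarrow> sphere \<Rightarrow> real \<Rightarrow> (complex \<Rightarrow> complex) \<Rightarrow> (complex \<Rightarrow> complex) \<Rightarrow> bool"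
where
  "sew_data m n P i Q r psiP psiQ \<longleftrightarrow> r > 0 \<and>
     (\<exists>e>0. psiP holomorphic_on ball 0 (r + e) \<and> inj_on psiP (ball 0 (r + e))) \<and>
     psiP 0 = pz P i \<and> (\<forall>\<^sub>F z in nhds 0. loc P i (psiP z) = z) \<and>
     (\<forall>k\<in>{1..m}. k \<noteq> i \<longrightarrow> pz P k \<notin> psiP ` cball 0 r) \<and>
     (\<exists>e>0. psiQ holomorphic_on ball 0 (inverse r + e) \<and> inj_on psiQ (ball 0 (inverse r + e))) \<and>
     psiQ 0 = 0 \<and> (\<forall>\<^sub>F z in nhds 0. - ser (sA Q 0) (psiQ z) = z) \<and>
     (\<forall>k\<in>{1..<n}. inverse (pz Q k) \<notin> psiQ ` cball 0 (inverse r))"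

definition sewable :: "nat \<Rightarrow> nat \<Rightarrow> sphere \<Rightarrow> nat \<Rightarrow> sphere \<Rightarrow> bool" where
  "sewable m n P i Q \<longleftrightarrow> (\<exists>r psiP psiQ. sew_data m n P i Q r psiP psiQ)"

text \<open>R = P i-infinity-0 Q: the glued sphere is conformally equivalent to R, i.e. there are
  maps F (on the part of P kept, minus its negative puncture at infinity) and G (on the part
  of Q kept), continuous, injective, holomorphic in the interiors, agreeing along the seam,
  jointly bijective onto C (with infinity going to infinity), and carrying punctures
  (in the prescribed order) and germs of local coordinates of P, Q to those of R.\<close>
definition sew :: "nat \<Rightarrow> nat \<Rightarrow> sphere \<Rightarrow> nat \<Rightarrow> sphere \<Rightarrow> sphere \<Rightarrow> bool" where
  "sew m n P i Q R \<longleftrightarrow> R \<in> K (m + n - 1) \<and>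
     (\<exists>r psiP psiQ F G. sew_data m n P i Q r psiP psiQ \<and>
       (let DP = {w. w \<notin> psiP ` ball 0 r};
            DQ = {w. w = 0 \<or> inverse w \<notin> psiQ ` ball 0 (inverse r)} in
        continuous_on DP F \<and> F holomorphic_on interior DP \<and> inj_on F DP \<and>
        continuous_on DQ G \<and> G holomorphic_on interior DQ \<and> inj_on G DQ \<and>
        (\<forall>z. norm z = r \<longrightarrow> F (psiP z) = G (inverse (psiQ (- inverse z)))) \<and>
        F ` DP \<union> G ` DQ = UNIV \<and>
        F ` interior DP \<inter> G ` DQ = {} \<and> F ` DP \<inter> G ` interior DQ = {} \<and>
        filterlim F at_infinity at_infinity \<and>
        (\<forall>\<^sub>F w in at_infinity. loc R 0 (F w) = loc P 0 w) \<and>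
        (\<forall>k\<in>{1..<i}. F (pz P k) = pz R k \<and>
            (\<forall>\<^sub>F w in nhds (pz P k). loc R k (F w) = loc P k w)) \<and>
        (\<forall>k\<in>{1..n}. G (pz Q k) = pz R (i - 1 + k) \<and>
            (\<forall>\<^sub>F w in nhds (pz Q k). loc R (i - 1 + k) (G w) = loc Q k w)) \<and>
        (\<forall>k\<in>{i<..m}. F (pz P k) = pz R (k + n - 1) \<and>
            (\<forall>\<^sub>F w in nhds (pz P k). loc R (k + n - 1) (F w) = loc P k w))))"

end

theory Submission
  imports Defs "HOL-Complex_Analysis.Complex_Analysis"
begin


definition cc :: "(complex \<Rightarrow> complex) \<Rightarrow> complex \<Rightarrow> complex" where
  "cc f = (\<lambda>z. cnj (f (cnj z)))"

lemma cc_apply[simp]: "cc f z = cnj (f (cnj z))" by (simp add: cc_def)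

lemma cc_comp: "cc f = cnj \<circ> f \<circ> cnj" by (simp add: cc_def fun_eq_iff)

lemma iterT_cnj: "iterT (\<lambda>j. cnj (A j)) k l = cnj (iterT A k l)"
  by (induction k arbitrary: l) auto

lemma expcoef_cnj: "expcoef (\<lambda>j. cnj (A j)) l = cnj (expcoef A l)"
  by (simp add: expcoef_def iterT_cnj)

lemma conv_radius_cnj: "conv_radius (expcoef (\<lambda>j. cnj (A j))) = conv_radius (expcoef A)"
  by (rule conv_radius_cong) (simp add: expcoef_cnj)

lemma ser_cnj:
  assumes "ereal (norm x) < conv_radius (expcoef A)"
  shows "ser (\<lambda>j. cnj (A j)) (cnj x) = cnj (ser A x)"
proof -
  have "summable (\<lambda>l. expcoef A l * x ^ l)" using summable_in_conv_radius assms by blast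
  then have "(\<lambda>l. expcoef A l * x ^ l) sums ser A x" by (simp add: ser_def summable_sums)
  then have s: "(\<lambda>l. cnj (expcoef A l * x ^ l)) sums cnj (ser A x)" by (simp only: sums_cnj)
  have eq: "(\<lambda>l. expcoef (\<lambda>j. cnj (A j)) l * cnj x ^ l) = (\<lambda>l. cnj (expcoef A l * x ^ l))"
    by (simp add: expcoef_cnj fun_eq_iff)
  have "ser (\<lambda>j. cnj (A j)) (cnj x) = suminf (\<lambda>l. cnj (expcoef A l * x ^ l))"
    unfolding ser_def eq ..
  also have "\<dots> = cnj (ser A x)" using s by (rule sums_unique[symmetric])
  finally show ?thesis .
qed

lemma sconj_simps[simp]:
  "pz (sconj P) k = cnj (pz P k)" "sa (sconj P) k = cnj (sa P k)"
  "sA (sconj P) k = (\<lambda>j. cnj (sA P k j))"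
  by (simp_all add: sconj_def)

lemma sconj_sconj[simp]: "sconj (sconj P) = P"
  by (simp add: sconj_def)

lemma K_sconj: "P \<in> K n \<Longrightarrow> sconj P \<in> K n"
  unfolding K_def by (auto simp: conv_radius_cnj fun_eq_iff)

lemma bij_sconj: "bij_betw sconj (K n) (K n)"
  by (rule bij_betw_byWitness[where f'=sconj]) (auto simp: K_sconj)

lemma KD:
  assumes "P \<in> K n"
  shows "\<And>k. k = 0 \<or> n \<le> k \<Longrightarrow> pz P k = 0"
    and "\<And>k. k \<in> {1..<n} \<Longrightarrow> pz P k \<noteq> 0"
    and "\<And>k. n < k \<Longrightarrow> sa P k = 0"
    and "\<And>k. k \<le> n \<Longrightarrow> conv_radius (expcoef (sA P k)) > 0"
proof -
  have H: "(\<forall>k. (k = 0 \<or> n \<le> k) \<longrightarrow> pz P k = 0) \<and>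
     (\<forall>k\<in>{1..<n}. pz P k \<noteq> 0) \<and>
     (\<forall>j\<in>{1..<n}. \<forall>k\<in>{1..<n}. j \<noteq> k \<longrightarrow> pz P j \<noteq> pz P k) \<and>
     (\<forall>k\<in>{1..n}. sa P k \<noteq> 0) \<and>
     (\<forall>k. (k = 0 \<or> n < k) \<longrightarrow> sa P k = 0) \<and>
     (\<forall>k. sA P k 0 = 0) \<and>
     (\<forall>k. n < k \<longrightarrow> sA P k = (\<lambda>_. 0)) \<and>
     (\<forall>k\<le>n. conv_radius (expcoef (sA P k)) > 0) \<and>
     (n = 0 \<longrightarrow> sA P 0 1 = 0)"
    using assms unfolding K_def mem_Collect_eq .
  have h1: "\<forall>k. (k = 0 \<or> n \<le> k) \<longrightarrow> pz P k = 0" using H by (elim conjE)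
  have h2: "\<forall>k\<in>{1..<n}. pz P k \<noteq> 0" using H by (elim conjE)
  have h5: "\<forall>k. (k = 0 \<or> n < k) \<longrightarrow> sa P k = 0" using H by (elim conjE)
  have h8: "\<forall>k\<le>n. conv_radius (expcoef (sA P k)) > 0" using H by (elim conjE)
  show "\<And>k. k = 0 \<or> n \<le> k \<Longrightarrow> pz P k = 0" using h1 by blast
  show "\<And>k. k \<in> {1..<n} \<Longrightarrow> pz P k \<noteq> 0" using h2 by simp
  show "\<And>k. n < k \<Longrightarrow> sa P k = 0" using h5 by simp
  show "\<And>k. k \<le> n \<Longrightarrow> conv_radius (expcoef (sA P k)) > 0" using h8 by simp
qed

definition good :: "sphere \<Rightarrow> nat \<Rightarrow> complex \<Rightarrow> bool" where
 "good P k w \<longleftrightarrow> (if k = 0 then ereal (norm (inverse w)) < conv_radius (expcoef (sA P 0))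
                 else ereal (norm (w - pz P k)) < conv_radius (expcoef (sA P k)))"

lemma loc_cnj:
  assumes "P \<in> K n" "k \<le> n \<Longrightarrow> good P k w"
  shows "loc (sconj P) k (cnj w) = cnj (loc P k w)"
proof (cases "k \<le> n")
  case True
  then have g: "good P k w" using assms by auto
  show ?thesis
  proof (cases "k = 0")
    case True
    then show ?thesis using g ser_cnj[of "inverse w" "sA P 0"]
      by (simp add: loc_def good_def)
  next
    case False
    then show ?thesis using g ser_cnj[of "w - pz P k" "sA P k"]
      by (simp add: loc_def good_def)
  qed
next
  case False
  then have "sa P k = 0" using KD(3)[OF assms(1)] by simp
  then show ?thesis using False by (simp add: loc_def)
qed

lemma cr_pos: "P \<in> K n \<Longrightarrow> k \<le> n \<Longrightarrow> conv_radius (expcoef (sA P k)) > 0"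
  by (rule KD(4))

lemma small_nhds:
  assumes "conv_radius c > 0"
  shows "eventually (\<lambda>x. ereal (norm (x - a)) < conv_radius c) (nhds a)"
proof -
  obtain e where e: "0 < ereal e" "ereal e < conv_radius c" using ereal_dense2[OF assms] by blast
  have "e > 0" using e by simp
  show ?thesis unfolding eventually_nhds_metric
  proof (intro exI[of _ e] conjI allI impI)
    fix x assume "dist x a < e"
    then have "ereal (norm (x - a)) < ereal e" by (simp add: dist_norm)
    then show "ereal (norm (x - a)) < conv_radius c" using e(2) by (rule order.strict_trans)
  qed (use \<open>e > 0\<close> in auto)
qed

lemma good_nhds:
  assumes "P \<in> K n" "1 \<le> k" "k \<le> n" shows "eventually (good P k) (nhds (pz P k))"
proof -
  have "eventually (\<lambda>x. ereal (norm (x - pz P k)) < conv_radius (expcoef (sA P k))) (nhds (pz P k))"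
    by (rule small_nhds[OF cr_pos[OF assms(1,3)]])
  then show ?thesis by (rule eventually_mono) (use assms(2) in \<open>simp add: good_def\<close>)
qed

lemma small_nhds0: "P \<in> K n \<Longrightarrow> eventually (\<lambda>x. ereal (norm x) < conv_radius (expcoef (sA P 0))) (nhds 0)"
  using small_nhds[OF cr_pos, of P n 0 0] by simp

lemma good_inf:
  assumes "P \<in> K n" shows "eventually (good P 0) at_infinity"
proof -
  obtain e where e: "0 < ereal e" "ereal e < conv_radius (expcoef (sA P 0))"
    using ereal_dense2[OF cr_pos[OF assms, of 0]] by blast
  have "e > 0" using e by simp
  show ?thesis unfolding eventually_at_infinity
  proof (intro exI[of _ "2 / e"] allI impI)
    fix x :: complex assume x: "2 / e \<le> norm x"
    have p: "2 / e > 0" using \<open>e > 0\<close> by simp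
    have "inverse (norm x) \<le> inverse (2 / e)" by (rule le_imp_inverse_le[OF x p])
    then have "norm (inverse x) \<le> e / 2" by (simp add: norm_inverse)
    then have "norm (inverse x) < e" using \<open>e > 0\<close> by linarith
    then have "ereal (norm (inverse x)) < ereal e" by simp
    then have "ereal (norm (inverse x)) < conv_radius (expcoef (sA P 0))" using e(2) by (rule order.strict_trans)
    then show "good P 0 x" unfolding good_def by simp
  qed
qed

lemma ev_nhds_cnj: "eventually P (nhds a) \<Longrightarrow> eventually (\<lambda>w. P (cnj w)) (nhds (cnj a))"
  unfolding eventually_nhds
proof (elim exE conjE)
  fix S assume S: "open S" "a \<in> S" "\<forall>x\<in>S. P x"
  have "open (cnj -` S)"
    using S(1) continuous_on_open_vimage[of UNIV cnj] continuous_on_cnj[OF continuous_on_id]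
    by auto
  then show "\<exists>S. open S \<and> cnj a \<in> S \<and> (\<forall>x\<in>S. P (cnj x))" using S by (intro exI[of _ "cnj -` S"]) auto
qed

lemma ev_inf_cnj: "eventually P at_infinity \<Longrightarrow> eventually (\<lambda>w. P (cnj w)) at_infinity"
  unfolding eventually_at_infinity by (metis complex_mod_cnj)

lemma ev_isCont: "isCont f a \<Longrightarrow> eventually P (nhds (f a)) \<Longrightarrow> eventually (\<lambda>w. P (f w)) (nhds a)"
  using tendsto_at_iff_tendsto_nhds[of f a] filterlim_iff by (metis isCont_def)

lemma open_cnj_image: "open S \<Longrightarrow> open (cnj ` S)"
  using continuous_on_open_vimage[of UNIV cnj] continuous_on_cnj[OF continuous_on_id]
  by (auto simp: image_cnj_conv_vimage_cnj)

lemma holo_cc: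
  assumes "open S" "f holomorphic_on S" shows "cc f holomorphic_on (cnj ` S)"
proof -
  have "\<forall>x\<in>cnj ` S. \<exists>f'. DERIV (cc f) x :> f'"
  proof
    fix x assume "x \<in> cnj ` S"
    then have "cnj x \<in> S" by (simp add: in_image_cnj_iff)
    then obtain d where "DERIV f (cnj (x)) :> d" using assms holomorphic_on_open by blast
    then show "\<exists>f'. DERIV (cc f) x :> f'" using has_field_derivative_cnj_cnj unfolding cc_comp by blast
  qed
  then show ?thesis using holomorphic_on_open open_cnj_image[OF assms(1)] by blast
qed

lemma cont_cc: "continuous_on S f \<Longrightarrow> continuous_on (cnj ` S) (cc f)"
  unfolding cc_def
  by (intro continuous_on_cnj continuous_on_compose2[of S f _ cnj]) (auto intro: continuous_on_cnj continuous_on_id)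

lemma inj_cc: "inj_on f S \<Longrightarrow> inj_on (cc f) (cnj ` S)"
  unfolding inj_on_def by auto

lemma image_cc: "cc f ` (cnj ` S) = cnj ` (f ` S)"
  by (auto simp: image_iff)

lemma cnj_ball[simp]: "cnj ` ball 0 r = ball 0 r" "cnj ` cball 0 r = cball 0 r"
  by (auto simp: in_image_cnj_iff)

lemma interior_cnj: "interior (cnj ` S) = cnj ` interior S"
  by (rule interior_injective_linear_image) (auto simp: linear_cnj inj_on_def)

lemma bij_cont_infinity:
  fixes f :: "complex \<Rightarrow> complex"
  assumes "bij f" "continuous_on UNIV f" shows "filterlim f at_infinity at_infinity"
proof -
  obtain g where h: "homeomorphism UNIV (f ` UNIV) f g"
    using invariance_of_domain_homeomorphism[of UNIV f] assms by (auto simp: bij_def)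
  have fU: "f ` UNIV = UNIV" using assms by (simp add: bij_def)
  have gc: "continuous_on UNIV g" and gf: "\<And>x. g (f x) = x"
    using h fU unfolding homeomorphism_def by auto
  show ?thesis unfolding filterlim_at_infinity[OF order.refl]
  proof (intro allI impI)
    fix r :: real assume "r > 0"
    have "compact (g ` cball 0 r)"
      by (rule compact_continuous_image) (auto intro: continuous_on_subset[OF gc])
    then obtain M where M: "\<And>x. x \<in> g ` cball 0 r \<Longrightarrow> norm x \<le> M"
      using compact_imp_bounded bounded_iff by metis
    show "eventually (\<lambda>x. r \<le> norm (f x)) at_infinity"
      unfolding eventually_at_infinity
    proof (intro exI[of _ "M + 1"] allI impI)
      fix x :: complex assume x: "M + 1 \<le> norm x"
      show "r \<le> norm (f x)"
      proof (rule ccontr)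
        assume "\<not> r \<le> norm (f x)"
        then have "f x \<in> cball 0 r" by simp
        then have "g (f x) \<in> g ` cball 0 r" by blast
        then show False using M[of x] gf[of x] x by simp
      qed
    qed
  qed
qed

lemma transfer_ev:
  assumes PK: "P \<in> K n" and QK: "Q \<in> K m"
   and ev: "eventually (\<lambda>w. loc Q k (f w) = loc P j w \<and> good Q k (f w) \<and> good P j w) F"
  shows "eventually (\<lambda>w. loc (sconj Q) k (cnj (f w)) = loc (sconj P) j (cnj w)) F"
  using ev by (rule eventually_mono) (simp add: loc_cnj[OF PK] loc_cnj[OF QK])

lemma transfer_nhds:
  assumes PK: "P \<in> K n" and QK: "Q \<in> K m"
   and ev: "eventually (\<lambda>w. loc Q k (f w) = loc P j w \<and> good Q k (f w) \<and> good P j w) (nhds a)"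
  shows "eventually (\<lambda>w. loc (sconj Q) k (cc f w) = loc (sconj P) j w) (nhds (cnj a))"
  using ev_nhds_cnj[OF transfer_ev[OF PK QK ev]] by simp

lemma transfer_inf:
  assumes PK: "P \<in> K n" and QK: "Q \<in> K m"
   and ev: "eventually (\<lambda>w. loc Q k (f w) = loc P j w \<and> good Q k (f w) \<and> good P j w) at_infinity"
  shows "eventually (\<lambda>w. loc (sconj Q) k (cc f w) = loc (sconj P) j w) at_infinity"
  using ev_inf_cnj[OF transfer_ev[OF PK QK ev]] by simp

lemma bij_cc: "bij f \<Longrightarrow> bij (cc f)"
proof -
  assume "bij f"
  moreover have "bij cnj" by (rule bij_betw_byWitness[where f'=cnj]) auto
  ultimately show ?thesis unfolding cc_comp by (intro bij_comp)
qed

lemma filterlim_cc: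
  assumes "filterlim f at_infinity at_infinity" shows "filterlim (cc f) at_infinity at_infinity"
  unfolding filterlim_iff
proof (intro allI impI)
  fix Pr :: "complex \<Rightarrow> bool" assume "eventually Pr at_infinity"
  then have "eventually (\<lambda>x. Pr (cnj x)) at_infinity" by (rule ev_inf_cnj)
  then have "eventually (\<lambda>x. Pr (cnj (f x))) at_infinity" using assms filterlim_iff by blast
  then show "eventually (\<lambda>x. Pr (cc f x)) at_infinity" using ev_inf_cnj by fastforce
qed

lemma perm_act_cnj:
  assumes sg: "\<sigma> permutes {1..n}" and pa: "perm_act n \<sigma> P Q"
  shows "perm_act n \<sigma> (sconj P) (sconj Q)"
proof -
  have PK: "P \<in> K n" and QK: "Q \<in> K n" using pa unfolding perm_act_def by auto
  obtain \<psi> where b: "bij \<psi>" and h: "\<psi> holomorphic_on UNIV"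
    and inf: "\<forall>\<^sub>F w in at_infinity. loc Q 0 (\<psi> w) = loc P 0 w"
    and pt: "\<forall>k\<in>{1..n}. \<psi> (pz P (\<sigma> k)) = pz Q k \<and>
           (\<forall>\<^sub>F w in nhds (pz P (\<sigma> k)). loc Q k (\<psi> w) = loc P (\<sigma> k) w)"
    using pa unfolding perm_act_def by blast
  have cont: "continuous_on UNIV \<psi>" using h holomorphic_on_imp_continuous_on by blast
  then have ic: "\<And>x. isCont \<psi> x" using continuous_on_eq_continuous_at by blast
  have fl: "filterlim \<psi> at_infinity at_infinity" using bij_cont_infinity[OF b cont] .
  have g1: "eventually (\<lambda>w. good Q 0 (\<psi> w)) at_infinity"
    using good_inf[OF QK] fl filterlim_iff by blast
  have inf': "eventually (\<lambda>w. loc (sconj Q) 0 (cc \<psi> w) = loc (sconj P) 0 w) at_infinity"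
    using eventually_conj[OF inf eventually_conj[OF g1 good_inf[OF PK]]] by (rule transfer_inf[OF PK QK])
  have pt': "\<forall>k\<in>{1..n}. cc \<psi> (pz (sconj P) (\<sigma> k)) = pz (sconj Q) k \<and>
           (\<forall>\<^sub>F w in nhds (pz (sconj P) (\<sigma> k)). loc (sconj Q) k (cc \<psi> w) = loc (sconj P) (\<sigma> k) w)"
  proof
    fix k assume k: "k \<in> {1..n}"
    then have sk: "\<sigma> k \<in> {1..n}" using permutes_in_image[OF sg, of k] k by simp
    have e1: "\<psi> (pz P (\<sigma> k)) = pz Q k" and e2: "\<forall>\<^sub>F w in nhds (pz P (\<sigma> k)). loc Q k (\<psi> w) = loc P (\<sigma> k) w"
      using pt k by blast+
    have g2: "eventually (\<lambda>w. good Q k (\<psi> w)) (nhds (pz P (\<sigma> k)))"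
      using ev_isCont[OF ic[of "pz P (\<sigma> k)"], where P="good Q k"] good_nhds[OF QK, of k] k e1 by simp
    have g3: "eventually (good P (\<sigma> k)) (nhds (pz P (\<sigma> k)))"
      using good_nhds[OF PK, of "\<sigma> k"] sk by auto
    have "eventually (\<lambda>w. loc (sconj Q) k (cc \<psi> w) = loc (sconj P) (\<sigma> k) w) (nhds (cnj (pz P (\<sigma> k))))"
      using eventually_conj[OF e2 eventually_conj[OF g2 g3]] by (rule transfer_nhds[OF PK QK])
    then show "cc \<psi> (pz (sconj P) (\<sigma> k)) = pz (sconj Q) k \<and>
           (\<forall>\<^sub>F w in nhds (pz (sconj P) (\<sigma> k)). loc (sconj Q) k (cc \<psi> w) = loc (sconj P) (\<sigma> k) w)"
      using e1 by simp
  qed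
  have rc: "range cnj = UNIV" by (metis complex_cnj_cnj surj_def)
  show ?thesis unfolding perm_act_def
    apply (intro conjI exI[of _ "cc \<psi>"])
    apply (rule K_sconj[OF PK])
    apply (rule K_sconj[OF QK])
    apply (rule bij_cc[OF b])
    apply (metis holo_cc[OF open_UNIV h] rc)
    apply (rule inf')
    apply (rule pt')
    done
qed



lemma image_cc_ball: "cc f ` ball 0 r = cnj ` (f ` ball 0 r)" "cc f ` cball 0 r = cnj ` (f ` cball 0 r)"
  using image_cc[of f "ball 0 r"] image_cc[of f "cball 0 r"] by simp_all

lemma cnj_Int: "cnj ` A \<inter> cnj ` B = cnj ` (A \<inter> B)"
  by (auto simp: in_image_cnj_iff)

lemma cnj_Un_UNIV: "A \<union> B = UNIV \<Longrightarrow> cnj ` A \<union> cnj ` B = UNIV"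
  by (auto simp: in_image_cnj_iff)

lemma sew_data_cnj:
  assumes PK: "P \<in> K m" and QK: "Q \<in> K n" and i: "1 \<le> i" "i \<le> m"
    and sd: "sew_data m n P i Q r psiP psiQ"
  shows "sew_data m n (sconj P) i (sconj Q) r (cc psiP) (cc psiQ)"
proof -
  have r: "r > 0" using sd unfolding sew_data_def by blast
  obtain e1 where e1: "e1 > 0" "psiP holomorphic_on ball 0 (r + e1)" "inj_on psiP (ball 0 (r + e1))"
    using sd unfolding sew_data_def by blast
  obtain e2 where e2: "e2 > 0" "psiQ holomorphic_on ball 0 (inverse r + e2)" "inj_on psiQ (ball 0 (inverse r + e2))"
    using sd unfolding sew_data_def by blast
  have p0: "psiP 0 = pz P i" and evP: "\<forall>\<^sub>F z in nhds 0. loc P i (psiP z) = z"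
    and nP: "\<forall>k\<in>{1..m}. k \<noteq> i \<longrightarrow> pz P k \<notin> psiP ` cball 0 r"
    and q0: "psiQ 0 = 0" and evQ: "\<forall>\<^sub>F z in nhds 0. - ser (sA Q 0) (psiQ z) = z"
    and nQ: "\<forall>k\<in>{1..<n}. inverse (pz Q k) \<notin> psiQ ` cball 0 (inverse r)"
    using sd unfolding sew_data_def by blast+
  have "0 \<in> ball (0::complex) (r + e1)" using r e1(1) by simp
  then have icP: "isCont psiP 0"
    using holomorphic_on_imp_continuous_on[OF e1(2)] continuous_on_eq_continuous_at[OF open_ball, of 0 "r + e1" psiP]
    by blast
  have "inverse r > 0" using r by simp
  then have "0 < inverse r + e2" using e2(1) by linarith
  then have "0 \<in> ball (0::complex) (inverse r + e2)" by simp
  then have icQ: "isCont psiQ 0"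
    using holomorphic_on_imp_continuous_on[OF e2(2)] continuous_on_eq_continuous_at[OF open_ball, of 0 "inverse r + e2" psiQ]
    by blast
  have gP: "eventually (\<lambda>z. good P i (psiP z)) (nhds 0)"
    using ev_isCont[OF icP, where P="good P i"] good_nhds[OF PK i] p0 by simp
  have evP': "\<forall>\<^sub>F z in nhds 0. loc (sconj P) i (cc psiP z) = z"
  proof -
    have "eventually (\<lambda>z. loc (sconj P) i (cnj (psiP z)) = cnj z) (nhds 0)"
      using eventually_conj[OF evP gP] by (rule eventually_mono) (simp add: loc_cnj[OF PK] i)
    from ev_nhds_cnj[OF this] show ?thesis by simp
  qed
  have gQ: "eventually (\<lambda>z. ereal (norm (psiQ z)) < conv_radius (expcoef (sA Q 0))) (nhds 0)"
    using ev_isCont[OF icQ, where P="\<lambda>x. ereal (norm x) < conv_radius (expcoef (sA Q 0))"] small_nhds0[OF QK] q0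
    by simp
  have evQ': "\<forall>\<^sub>F z in nhds 0. - ser (sA (sconj Q) 0) (cc psiQ z) = z"
  proof -
    have "eventually (\<lambda>z. - ser (\<lambda>j. cnj (sA Q 0 j)) (cnj (psiQ z)) = cnj z) (nhds 0)"
      using eventually_conj[OF evQ gQ]
    proof (rule eventually_mono)
      fix z assume h: "- ser (sA Q 0) (psiQ z) = z \<and> ereal (norm (psiQ z)) < conv_radius (expcoef (sA Q 0))"
      then have "ser (sA Q 0) (psiQ z) = - z" by (metis minus_minus)
      then show "- ser (\<lambda>j. cnj (sA Q 0 j)) (cnj (psiQ z)) = cnj z"
        using ser_cnj[of "psiQ z" "sA Q 0"] h by simp
    qed
    from ev_nhds_cnj[OF this] show ?thesis by simp
  qed
  have H1: "cc psiP holomorphic_on ball 0 (r + e1)" using holo_cc[OF open_ball e1(2)] by simp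
  have I1: "inj_on (cc psiP) (ball 0 (r + e1))" using inj_cc[OF e1(3)] by simp
  have H2: "cc psiQ holomorphic_on ball 0 (inverse r + e2)" using holo_cc[OF open_ball e2(2)] by simp
  have I2: "inj_on (cc psiQ) (ball 0 (inverse r + e2))" using inj_cc[OF e2(3)] by simp
  have nP': "\<forall>k\<in>{1..m}. k \<noteq> i \<longrightarrow> pz (sconj P) k \<notin> cc psiP ` cball 0 r"
    using nP by (simp del: cc_apply add: image_cc_ball in_image_cnj_iff)
  have nQ': "\<forall>k\<in>{1..<n}. inverse (pz (sconj Q) k) \<notin> cc psiQ ` cball 0 (inverse r)"
    using nQ by (simp del: cc_apply add: image_cc_ball in_image_cnj_iff)
  show ?thesis unfolding sew_data_def
    apply (intro conjI)
    apply (rule r)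
    using e1(1) H1 I1 apply blast
    using p0 apply simp
    apply (rule evP')
    apply (rule nP')
    using e2(1) H2 I2 apply blast
    using q0 apply simp
    apply (rule evQ')
    apply (rule nQ')
    done
qed

lemma interior_DP:
  assumes sd: "sew_data m n P i Q r psiP psiQ" and k: "k \<in> {1..m}" "k \<noteq> i"
  shows "pz P k \<in> interior {w. w \<notin> psiP ` ball 0 r}"
proof -
  obtain e where e: "e > 0" "psiP holomorphic_on ball 0 (r + e)" using sd unfolding sew_data_def by blast
  have nk: "pz P k \<notin> psiP ` cball 0 r" using sd k unfolding sew_data_def by blast
  have "continuous_on (cball 0 r) psiP"
    using holomorphic_on_imp_continuous_on[OF e(2)] by (rule continuous_on_subset) (use e in auto)
  then have "compact (psiP ` cball 0 r)" by (rule compact_continuous_image) simp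
  then have op: "open (- (psiP ` cball 0 r))" by (simp add: compact_imp_closed open_Compl)
  have sub: "- (psiP ` cball 0 r) \<subseteq> {w. w \<notin> psiP ` ball 0 r}" by auto
  show ?thesis using interior_maximal[OF sub op] nk by auto
qed

lemma interior_DQ:
  assumes sd: "sew_data m n P i Q r psiP psiQ" and QK: "Q \<in> K n" and k: "k \<in> {1..n}"
  shows "pz Q k \<in> interior {w. w = 0 \<or> inverse w \<notin> psiQ ` ball 0 (inverse r)}"
proof -
  obtain e where e: "e > 0" "psiQ holomorphic_on ball 0 (inverse r + e)" using sd unfolding sew_data_def by blast
  have nQ: "\<forall>k\<in>{1..<n}. inverse (pz Q k) \<notin> psiQ ` cball 0 (inverse r)" using sd unfolding sew_data_def by blast
  define C where "C = psiQ ` cball 0 (inverse r)"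
  have "continuous_on (cball 0 (inverse r)) psiQ"
    using holomorphic_on_imp_continuous_on[OF e(2)] by (rule continuous_on_subset) (use e in auto)
  then have "compact C" unfolding C_def by (rule compact_continuous_image) simp
  then obtain M where M: "M > 0" "\<And>x. x \<in> C \<Longrightarrow> norm x \<le> M"
    using compact_imp_bounded bounded_pos by metis
  have ci: "continuous_on (- {0}) (\<lambda>x::complex. inverse x)"
    by (rule continuous_on_inverse[OF continuous_on_id]) auto
  have "closed C" using \<open>compact C\<close> compact_imp_closed by blast
  moreover have o0: "open (- {0::complex})" by (simp add: open_Compl)
  ultimately have "open (inverse -` (- C) \<inter> (- {0}))"
    using continuous_on_open_vimage[OF o0, of inverse] ci by (auto simp: open_Compl)
  then have opT: "open (ball 0 (inverse M) \<union> (inverse -` (- C) \<inter> (- {0})))" by auto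
  have subC: "psiQ ` ball 0 (inverse r) \<subseteq> C" unfolding C_def by auto
  have sub: "ball 0 (inverse M) \<union> (inverse -` (- C) \<inter> (- {0})) \<subseteq> {w. w = 0 \<or> inverse w \<notin> psiQ ` ball 0 (inverse r)}"
  proof
    fix w assume w: "w \<in> ball 0 (inverse M) \<union> (inverse -` (- C) \<inter> (- {0}))"
    show "w \<in> {w. w = 0 \<or> inverse w \<notin> psiQ ` ball 0 (inverse r)}"
    proof (cases "w = 0")
      case False
      have "inverse w \<notin> C"
      proof (cases "w \<in> ball 0 (inverse M)")
        case True
        then have "norm w < inverse M" by simp
        then have "inverse (inverse M) < inverse (norm w)"
          using False by (intro less_imp_inverse_less) auto
        then have "norm (inverse w) > M" using M(1) by (simp add: norm_inverse)
        then show ?thesis using M(2) by force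
      next
        case False
        then show ?thesis using w by auto
      qed
      then show ?thesis using subC by auto
    qed simp
  qed
  have "pz Q k \<in> ball 0 (inverse M) \<union> (inverse -` (- C) \<inter> (- {0}))"
  proof (cases "k = n")
    case True
    then have "pz Q k = 0" using KD(1)[OF QK] by simp
    then show ?thesis using M(1) by simp
  next
    case False
    then have "k \<in> {1..<n}" using k by auto
    then have "pz Q k \<noteq> 0" "inverse (pz Q k) \<notin> C" using KD(2)[OF QK] nQ unfolding C_def by auto
    then show ?thesis by simp
  qed
  then show ?thesis using interior_maximal[OF sub opT] by blast
qed

lemma punct_cnj:
  assumes PK: "P \<in> K m" and RK: "R \<in> K N" and k: "1 \<le> k" "k \<le> m" and j: "1 \<le> j" "j \<le> N"
   and ic: "isCont F (pz P k)"
   and h: "F (pz P k) = pz R j \<and> (\<forall>\<^sub>F w in nhds (pz P k). loc R j (F w) = loc P k w)"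
  shows "cc F (pz (sconj P) k) = pz (sconj R) j \<and>
         (\<forall>\<^sub>F w in nhds (pz (sconj P) k). loc (sconj R) j (cc F w) = loc (sconj P) k w)"
proof -
  have e1: "F (pz P k) = pz R j" and e2: "\<forall>\<^sub>F w in nhds (pz P k). loc R j (F w) = loc P k w"
    using h by blast+
  have g2: "eventually (\<lambda>w. good R j (F w)) (nhds (pz P k))"
    using ev_isCont[OF ic, where P="good R j"] good_nhds[OF RK j] e1 by simp
  have g3: "eventually (good P k) (nhds (pz P k))"
    using good_nhds[OF PK k] .
  have "eventually (\<lambda>w. loc (sconj R) j (cc F w) = loc (sconj P) k w) (nhds (cnj (pz P k)))"
    using eventually_conj[OF e2 eventually_conj[OF g2 g3]] by (rule transfer_nhds[OF PK RK])
  then show ?thesis using e1 by simp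
qed



lemma sew_cnj:
  assumes PK: "P \<in> K m" and QK: "Q \<in> K n" and i: "1 \<le> i" "i \<le> m" and sw: "sew m n P i Q R"
  shows "sew m n (sconj P) i (sconj Q) (sconj R)"
proof -
  have RK: "R \<in> K (m + n - 1)" using sw unfolding sew_def by blast
  obtain r psiP psiQ F G where sd: "sew_data m n P i Q r psiP psiQ"
    and L: "let DP = {w. w \<notin> psiP ` ball 0 r};
            DQ = {w. w = 0 \<or> inverse w \<notin> psiQ ` ball 0 (inverse r)} in
        continuous_on DP F \<and> F holomorphic_on interior DP \<and> inj_on F DP \<and>
        continuous_on DQ G \<and> G holomorphic_on interior DQ \<and> inj_on G DQ \<and>
        (\<forall>z. norm z = r \<longrightarrow> F (psiP z) = G (inverse (psiQ (- inverse z)))) \<and>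
        F ` DP \<union> G ` DQ = UNIV \<and>
        F ` interior DP \<inter> G ` DQ = {} \<and> F ` DP \<inter> G ` interior DQ = {} \<and>
        filterlim F at_infinity at_infinity \<and>
        (\<forall>\<^sub>F w in at_infinity. loc R 0 (F w) = loc P 0 w) \<and>
        (\<forall>k\<in>{1..<i}. F (pz P k) = pz R k \<and>
            (\<forall>\<^sub>F w in nhds (pz P k). loc R k (F w) = loc P k w)) \<and>
        (\<forall>k\<in>{1..n}. G (pz Q k) = pz R (i - 1 + k) \<and>
            (\<forall>\<^sub>F w in nhds (pz Q k). loc R (i - 1 + k) (G w) = loc Q k w)) \<and>
        (\<forall>k\<in>{i<..m}. F (pz P k) = pz R (k + n - 1) \<and>
            (\<forall>\<^sub>F w in nhds (pz P k). loc R (k + n - 1) (F w) = loc P k w))"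
    using sw unfolding sew_def by blast
  define DP where "DP = {w. w \<notin> psiP ` ball 0 r}"
  define DQ where "DQ = {w. w = 0 \<or> inverse w \<notin> psiQ ` ball 0 (inverse r)}"
  have L2: "continuous_on DP F \<and> F holomorphic_on interior DP \<and> inj_on F DP \<and>
        continuous_on DQ G \<and> G holomorphic_on interior DQ \<and> inj_on G DQ \<and>
        (\<forall>z. norm z = r \<longrightarrow> F (psiP z) = G (inverse (psiQ (- inverse z)))) \<and>
        F ` DP \<union> G ` DQ = UNIV \<and>
        F ` interior DP \<inter> G ` DQ = {} \<and> F ` DP \<inter> G ` interior DQ = {} \<and>
        filterlim F at_infinity at_infinity \<and>
        (\<forall>\<^sub>F w in at_infinity. loc R 0 (F w) = loc P 0 w) \<and>
        (\<forall>k\<in>{1..<i}. F (pz P k) = pz R k \<and>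
            (\<forall>\<^sub>F w in nhds (pz P k). loc R k (F w) = loc P k w)) \<and>
        (\<forall>k\<in>{1..n}. G (pz Q k) = pz R (i - 1 + k) \<and>
            (\<forall>\<^sub>F w in nhds (pz Q k). loc R (i - 1 + k) (G w) = loc Q k w)) \<and>
        (\<forall>k\<in>{i<..m}. F (pz P k) = pz R (k + n - 1) \<and>
            (\<forall>\<^sub>F w in nhds (pz P k). loc R (k + n - 1) (F w) = loc P k w))"
    using L unfolding Let_def DP_def DQ_def .
  then have c1: "continuous_on DP F" and h1: "F holomorphic_on interior DP" and i1: "inj_on F DP"
    and c2: "continuous_on DQ G" and h2: "G holomorphic_on interior DQ" and i2: "inj_on G DQ"
    and seam: "\<forall>z. norm z = r \<longrightarrow> F (psiP z) = G (inverse (psiQ (- inverse z)))"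
    and un: "F ` DP \<union> G ` DQ = UNIV"
    and d1: "F ` interior DP \<inter> G ` DQ = {}" and d2: "F ` DP \<inter> G ` interior DQ = {}"
    and fl: "filterlim F at_infinity at_infinity"
    and ev0: "\<forall>\<^sub>F w in at_infinity. loc R 0 (F w) = loc P 0 w"
    and pA: "\<forall>k\<in>{1..<i}. F (pz P k) = pz R k \<and>
            (\<forall>\<^sub>F w in nhds (pz P k). loc R k (F w) = loc P k w)"
    and pB: "\<forall>k\<in>{1..n}. G (pz Q k) = pz R (i - 1 + k) \<and>
            (\<forall>\<^sub>F w in nhds (pz Q k). loc R (i - 1 + k) (G w) = loc Q k w)"
    and pC: "\<forall>k\<in>{i<..m}. F (pz P k) = pz R (k + n - 1) \<and>
            (\<forall>\<^sub>F w in nhds (pz P k). loc R (k + n - 1) (F w) = loc P k w)"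
    by blast+
  have DPeq: "{w. w \<notin> cc psiP ` ball 0 r} = cnj ` DP"
    unfolding DP_def by (auto simp del: cc_apply simp add: image_cc_ball in_image_cnj_iff)
  have DQeq: "{w. w = 0 \<or> inverse w \<notin> cc psiQ ` ball 0 (inverse r)} = cnj ` DQ"
    unfolding DQ_def by (auto simp del: cc_apply simp add: image_cc_ball in_image_cnj_iff)
  have icF: "isCont F x" if "x \<in> interior DP" for x
    using holomorphic_on_imp_continuous_on[OF h1] continuous_on_eq_continuous_at[OF open_interior] that
    by blast
  have icG: "isCont G x" if "x \<in> interior DQ" for x
    using holomorphic_on_imp_continuous_on[OF h2] continuous_on_eq_continuous_at[OF open_interior] that
    by blast
  have sd': "sew_data m n (sconj P) i (sconj Q) r (cc psiP) (cc psiQ)"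
    by (rule sew_data_cnj[OF PK QK i sd])
  have C1: "continuous_on (cnj ` DP) (cc F)" by (rule cont_cc[OF c1])
  have H1: "cc F holomorphic_on interior (cnj ` DP)"
    unfolding interior_cnj by (rule holo_cc[OF open_interior h1])
  have I1: "inj_on (cc F) (cnj ` DP)" by (rule inj_cc[OF i1])
  have C2: "continuous_on (cnj ` DQ) (cc G)" by (rule cont_cc[OF c2])
  have H2: "cc G holomorphic_on interior (cnj ` DQ)"
    unfolding interior_cnj by (rule holo_cc[OF open_interior h2])
  have I2: "inj_on (cc G) (cnj ` DQ)" by (rule inj_cc[OF i2])
  have S: "\<forall>z. norm z = r \<longrightarrow> cc F (cc psiP z) = cc G (inverse (cc psiQ (- inverse z)))"
  proof (intro allI impI)
    fix z :: complex assume "norm z = r"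
    then have "F (psiP (cnj z)) = G (inverse (psiQ (- inverse (cnj z))))" using seam by simp
    then show "cc F (cc psiP z) = cc G (inverse (cc psiQ (- inverse z)))" by simp
  qed
  have U: "cc F ` cnj ` DP \<union> cc G ` cnj ` DQ = UNIV"
    unfolding image_cc by (rule cnj_Un_UNIV[OF un])
  have D1: "cc F ` interior (cnj ` DP) \<inter> cc G ` cnj ` DQ = {}"
    unfolding interior_cnj image_cc cnj_Int d1 by simp
  have D2: "cc F ` cnj ` DP \<inter> cc G ` interior (cnj ` DQ) = {}"
    unfolding interior_cnj image_cc cnj_Int d2 by simp
  have FL: "filterlim (cc F) at_infinity at_infinity" by (rule filterlim_cc[OF fl])
  have gR: "eventually (\<lambda>w. good R 0 (F w)) at_infinity"
    using good_inf[OF RK] fl filterlim_iff by blast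
  have E0: "\<forall>\<^sub>F w in at_infinity. loc (sconj R) 0 (cc F w) = loc (sconj P) 0 w"
    using eventually_conj[OF ev0 eventually_conj[OF gR good_inf[OF PK]]] by (rule transfer_inf[OF PK RK])
  have PA: "\<forall>k\<in>{1..<i}. cc F (pz (sconj P) k) = pz (sconj R) k \<and>
            (\<forall>\<^sub>F w in nhds (pz (sconj P) k). loc (sconj R) k (cc F w) = loc (sconj P) k w)"
  proof
    fix k assume k: "k \<in> {1..<i}"
    have "pz P k \<in> interior DP" unfolding DP_def by (rule interior_DP[OF sd]) (use k i in auto)
    then show "cc F (pz (sconj P) k) = pz (sconj R) k \<and>
            (\<forall>\<^sub>F w in nhds (pz (sconj P) k). loc (sconj R) k (cc F w) = loc (sconj P) k w)"
      using k i pA by (intro punct_cnj[OF PK RK _ _ _ _ icF]) auto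
  qed
  have PB: "\<forall>k\<in>{1..n}. cc G (pz (sconj Q) k) = pz (sconj R) (i - 1 + k) \<and>
            (\<forall>\<^sub>F w in nhds (pz (sconj Q) k). loc (sconj R) (i - 1 + k) (cc G w) = loc (sconj Q) k w)"
  proof
    fix k assume k: "k \<in> {1..n}"
    have "pz Q k \<in> interior DQ" unfolding DQ_def by (rule interior_DQ[OF sd QK k])
    then show "cc G (pz (sconj Q) k) = pz (sconj R) (i - 1 + k) \<and>
            (\<forall>\<^sub>F w in nhds (pz (sconj Q) k). loc (sconj R) (i - 1 + k) (cc G w) = loc (sconj Q) k w)"
      using k i pB by (intro punct_cnj[OF QK RK _ _ _ _ icG]) auto
  qed
  have PC: "\<forall>k\<in>{i<..m}. cc F (pz (sconj P) k) = pz (sconj R) (k + n - 1) \<and>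
            (\<forall>\<^sub>F w in nhds (pz (sconj P) k). loc (sconj R) (k + n - 1) (cc F w) = loc (sconj P) k w)"
  proof
    fix k assume k: "k \<in> {i<..m}"
    have "pz P k \<in> interior DP" unfolding DP_def by (rule interior_DP[OF sd]) (use k i in auto)
    then show "cc F (pz (sconj P) k) = pz (sconj R) (k + n - 1) \<and>
            (\<forall>\<^sub>F w in nhds (pz (sconj P) k). loc (sconj R) (k + n - 1) (cc F w) = loc (sconj P) k w)"
      using k i pC by (intro punct_cnj[OF PK RK _ _ _ _ icF]) auto
  qed
  show ?thesis unfolding sew_def
    apply (rule conjI[OF K_sconj[OF RK]])
    apply (rule exI[of _ r], rule exI[of _ "cc psiP"], rule exI[of _ "cc psiQ"], rule exI[of _ "cc F"], rule exI[of _ "cc G"])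
    apply (rule conjI[OF sd'])
    unfolding Let_def DPeq DQeq
    using C1 H1 I1 C2 H2 I2 S U D1 D2 FL E0 PA PB PC by blast
qed


theorem proposition2p15:
  shows "(\<forall>n. bij_betw sconj (K n) (K n)) \<and>
         sconj sph_id = sph_id \<and>
         (\<forall>n \<sigma> P Q. \<sigma> permutes {1..n} \<longrightarrow> perm_act n \<sigma> P Q \<longrightarrow>
             perm_act n \<sigma> (sconj P) (sconj Q)) \<and>
         (\<forall>m n i P Q. P \<in> K m \<longrightarrow> Q \<in> K n \<longrightarrow> 1 \<le> i \<longrightarrow> i \<le> m \<longrightarrow>
             sewable m n P i Q \<longrightarrow>
               sewable m n (sconj P) i (sconj Q) \<and>
               (\<forall>R. sew m n P i Q R \<longrightarrow> sew m n (sconj P) i (sconj Q) (sconj R)))"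
proof (intro conjI allI impI)
  fix n show "bij_betw sconj (K n) (K n)" by (rule bij_sconj)
next
  show "sconj sph_id = sph_id" by (simp add: sconj_def sph_id_def fun_eq_iff)
next
  fix n \<sigma> P Q assume "\<sigma> permutes {1..n}" "perm_act n \<sigma> P Q"
  then show "perm_act n \<sigma> (sconj P) (sconj Q)" by (rule perm_act_cnj)
next
  fix m n i P Q assume h: "P \<in> K m" "Q \<in> K n" "1 \<le> i" "i \<le> m" "sewable m n P i Q"
  then obtain r psiP psiQ where "sew_data m n P i Q r psiP psiQ" unfolding sewable_def by blast
  then have "sew_data m n (sconj P) i (sconj Q) r (cc psiP) (cc psiQ)"
    using sew_data_cnj h by blast
  then show "sewable m n (sconj P) i (sconj Q)" unfolding sewable_def by blast
next
  fix m n i P Q R assume h: "P \<in> K m" "Q \<in> K n" "1 \<le> i" "i \<le> m" "sewable m n P i Q" "sew m n P i Q R"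
  then show "sew m n (sconj P) i (sconj Q) (sconj R)" using sew_cnj by blast
qed

end
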